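(* Let $R$ be a ring, $S=\mathrm{Spec}\,R$, $A$ a finite abelian group, and $\pi\colon X\to S$ a $D(A)$-cover all of whose line bundles $\mathcal{L}_\lambda$ are trivial, with chosen generators $v_\lambda$ of $\mathcal{L}_\lambda$ ($v_0=1$) so that $v_\lambda v_{\lambda'}=s_{\lambda,\lambda'}v_{\lambda+\lambda'}$ with $s_{\lambda,\lambda'}\in R$. Then $X$ is the spectrum of $$R[\{v_\lambda\}_{\lambda\in A}]/(\{v_\lambda v_{\lambda'}-s_{\lambda,\lambda'}v_{\lambda+\lambda'}\}_{\lambda,\lambda'\in A}),$$ and the discriminant ideal of $\pi$ is $$d(\pi)=\Big(|A|^{|A|}\prod_{\lambda\in A}s_{\lambda,-\lambda}\Big).$$
   Context: A $D(A)$-cover is a finite locally free $f\colon X\to S$ with an action of $D(A)=\mathrm{Spec}\,\mathcal{O}_S[A]$ such that fppf locally $f_*\mathcal{O}_X$ is the regular representation as a comodule; equivalently $f_*\mathcal{O}_X=\bigoplus_{\lambda\in A}\mathcal{L}_\lambda$ with line bundles $\mathcal{L}_\lambda$, $\mathcal{L}_0=\mathcal{O}_S$, and multiplication maps $\mathcal{L}_\lambda\otimes\mathcal{L}_{\lambda'}\to\mathcal{L}_{\lambda+\lambda'}$. The discriminant ideal $d(\pi)$ is the ideal generated by the determinant of the trace pairing $(x,y)\mapsto\mathrm{Tr}(xy)$ of the finite free algebra $\mathcal{O}_X$ over $R$ (locally, in general). *)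

theory Defs
  imports "HOL-Analysis.Determinants"
begin

text \<open>The algebra O_X = (+)_{l in A} R v_l of a D(A)-cover with trivialised line bundles is
  modelled as coefficient functions A => R (x = sum_l x(l) v_l), with multiplication determined
  by v_l v_l' = s l l' v_(l+l').\<close>

definition basis_vec :: "'g \<Rightarrow> 'g \<Rightarrow> 'r::comm_ring_1" where
  "basis_vec l = (\<lambda>m. if m = l then 1 else 0)"

definition cmult :: "('g::{finite,ab_group_add} \<Rightarrow> 'g \<Rightarrow> 'r::comm_ring_1)
     \<Rightarrow> ('g \<Rightarrow> 'r) \<Rightarrow> ('g \<Rightarrow> 'r) \<Rightarrow> ('g \<Rightarrow> 'r)" where
  "cmult s x y = (\<lambda>m. \<Sum>l\<in>UNIV. \<Sum>l'\<in>UNIV. if l + l' = m then x l * y l' * s l l' else 0)"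

definition alg_trace :: "('g::{finite,ab_group_add} \<Rightarrow> 'g \<Rightarrow> 'r::comm_ring_1)
     \<Rightarrow> ('g \<Rightarrow> 'r) \<Rightarrow> 'r" where
  "alg_trace s x = (\<Sum>k\<in>UNIV. cmult s x (basis_vec k) k)"

definition disc :: "('g::{finite,ab_group_add} \<Rightarrow> 'g \<Rightarrow> 'r::comm_ring_1) \<Rightarrow> 'r" where
  "disc s = det (\<chi> l m. alg_trace s (cmult s (basis_vec l) (basis_vec m)))"

definition principal_ideal :: "'r::comm_ring_1 \<Rightarrow> 'r set" where
  "principal_ideal d = {r * d | r. True}"

definition is_ring_hom :: "('r::comm_ring_1 \<Rightarrow> 'b::comm_ring_1) \<Rightarrow> bool" where
  "is_ring_hom f \<longleftrightarrow> f 1 = 1 \<and> (\<forall>a b. f (a + b) = f a + f b) \<and> (\<forall>a b. f (a * b) = f a * f b)"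

definition is_alg_hom :: "('g::{finite,ab_group_add} \<Rightarrow> 'g \<Rightarrow> 'r::comm_ring_1)
     \<Rightarrow> ('r \<Rightarrow> 'b::comm_ring_1) \<Rightarrow> (('g \<Rightarrow> 'r) \<Rightarrow> 'b) \<Rightarrow> bool" where
  "is_alg_hom s iota phi \<longleftrightarrow>
     phi (basis_vec 0) = 1 \<and>
     (\<forall>x y. phi (\<lambda>m. x m + y m) = phi x + phi y) \<and>
     (\<forall>x y. phi (cmult s x y) = phi x * phi y) \<and>
     (\<forall>r x. phi (\<lambda>m. r * x m) = iota r * phi x)"

end

theory Submission
  imports Defs
begin

lemma det_monomial:
  fixes c :: "'g::{finite,ab_group_add} \<Rightarrow> 'r::comm_ring_1"
  shows "det (\<chi> l m. if m = - l then c l else 0)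
       = of_int (sign (uminus::'g\<Rightarrow>'g)) * prod c UNIV"
proof -
  let ?A = "(\<chi> l m. if m = - l then c l else 0)"
  let ?U = "UNIV:: 'g set"
  let ?PU = "{p. p permutes ?U}"
  let ?pp = "\<lambda>p. of_int (sign p) * prod (\<lambda>i. ?A$i$p i) (UNIV :: 'g set)"
  have fU: "finite ?U" by simp
  from finite_permutations[OF fU] have fPU: "finite ?PU" .
  have id0: "{uminus} \<subseteq> ?PU"
    by (auto simp: permutes_univ) (metis minus_minus)
  have p0: "\<forall>p \<in> ?PU - {uminus}. ?pp p = 0"
  proof
    fix p
    assume p: "p \<in> ?PU - {uminus}"
    then obtain i where i: "p i \<noteq> - i"
      by fastforce
    then have "\<exists>i \<in> ?U. ?A$i$p i = 0"
      by auto
    with prod_zero [OF fU] show "?pp p = 0"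
      by force
  qed
  from sum.mono_neutral_cong_left[OF fPU id0 p0] show ?thesis
    unfolding det_def by simp
qed

lemma cmult_bv:
  fixes s :: "'g::{finite,ab_group_add} \<Rightarrow> 'g \<Rightarrow> 'r::comm_ring_1"
  shows   "cmult s (basis_vec l) (basis_vec m) = (\<lambda>k. if l + m = k then s l m else 0)"
proof (rule ext)
  fix k
  let ?c = "if l + m = k then s l m else 0"
  have "cmult s (basis_vec l) (basis_vec m) k
     = (\<Sum>la\<in>(UNIV::'g set). \<Sum>l'\<in>UNIV. if la = l then (if l' = m then ?c else 0) else 0)"
    unfolding cmult_def basis_vec_def by (intro sum.cong refl) auto
  also have "\<dots> = (\<Sum>la\<in>(UNIV::'g set). if la = l then (\<Sum>l'\<in>UNIV. if l' = m then ?c else 0) else 0)"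
    by (intro sum.cong refl) auto
  also have "\<dots> = ?c" by simp
  finally show "cmult s (basis_vec l) (basis_vec m) k = ?c" .
qed

lemma trace_eq:
  fixes s :: "'g::{finite,ab_group_add} \<Rightarrow> 'g \<Rightarrow> 'r::comm_ring_1"
  shows "alg_trace s y = y 0 * (\<Sum>k\<in>UNIV. s 0 k)"
proof -
  have "alg_trace s y = (\<Sum>k\<in>UNIV. y 0 * s 0 k)"
    unfolding alg_trace_def
  proof (rule sum.cong[OF refl])
    fix k
    let ?c = "y 0 * s 0 k"
    have "cmult s y (basis_vec k) k
     = (\<Sum>la\<in>(UNIV::'g set). \<Sum>l'\<in>UNIV. if la = 0 then (if l' = k then ?c else 0) else 0)"
      unfolding cmult_def basis_vec_def by (rule sum.cong[OF refl], rule sum.cong[OF refl]) auto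
    also have "\<dots> = (\<Sum>la\<in>(UNIV::'g set). if la = 0 then (\<Sum>l'\<in>UNIV. if l' = k then ?c else 0) else 0)"
      by (intro sum.cong refl) auto
    also have "\<dots> = ?c" by simp
    finally show "cmult s y (basis_vec k) k = ?c" .
  qed
  then show ?thesis by (simp add: sum_distrib_left)
qed


lemma principal_ideal_sign:
  "principal_ideal (of_int (sign p) * (d::'r::comm_ring_1)) = principal_ideal d"
proof (cases rule: sign_cases[of p])
  case even
  then show ?thesis by simp
next
  case odd
  have "{r * (- d) |r. True} = {r * d |r. True}"
  proof (intro set_eqI iffI)
    fix x assume "x \<in> {r * (- d) |r. True}"
    then obtain r where "x = r * (- d)" by blast
    then have "x = (- r) * d" by simp
    then show "x \<in> {r * d |r. True}" by blast
  next
    fix x assume "x \<in> {r * d |r. True}"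
    then obtain r where "x = r * d" by blast
    then have "x = (- r) * (- d)" by simp
    then show "x \<in> {r * (- d) |r. True}" by blast
  qed
  then show ?thesis using odd by (simp add: principal_ideal_def)
qed

lemma ring_hom_0:
  assumes "is_ring_hom (iota :: 'r::comm_ring_1 \<Rightarrow> 'b::comm_ring_1)"
  shows "iota 0 = 0"
proof -
  have "iota (0 + 0) = iota 0 + iota (0::'r)" using assms unfolding is_ring_hom_def by blast
  then show ?thesis by simp
qed

lemma ring_hom_sum:
  assumes "is_ring_hom (iota :: 'r::comm_ring_1 \<Rightarrow> 'b::comm_ring_1)" and "finite F"
  shows "iota (\<Sum>x\<in>F. f x) = (\<Sum>x\<in>F. iota (f x))"
  using assms(2)
proof (induction F rule: finite_induct)
  case empty
  then show ?case using ring_hom_0[OF assms(1)] by simp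
next
  case (insert a F)
  then show ?case using assms(1) by (simp add: is_ring_hom_def)
qed

lemma alg_hom_sum:
  fixes s :: "'g::{finite,ab_group_add} \<Rightarrow> 'g \<Rightarrow> 'r::comm_ring_1"
  assumes "is_alg_hom s iota psi" and "finite F"
  shows "psi (\<lambda>m. \<Sum>l\<in>F. f l m) = (\<Sum>l\<in>F. psi (f l))"
proof -
  have A: "\<forall>x y. psi (\<lambda>m. x m + y m) = psi x + psi y"
    using assms(1) unfolding is_alg_hom_def by blast
  show ?thesis
  using assms(2)
proof (induction F rule: finite_induct)
  case empty
  have "psi (\<lambda>m::'g. (0::'r)) = psi (\<lambda>m. 0) + psi (\<lambda>m. 0)"
    using A[rule_format, of "\<lambda>m. 0" "\<lambda>m. 0"] by simp
  then show ?case by simp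
next
  case (insert a F)
  have "psi (\<lambda>m. f a m + (\<Sum>l\<in>F. f l m)) = psi (f a) + psi (\<lambda>m. \<Sum>l\<in>F. f l m)"
    using A[rule_format, of "f a" "\<lambda>m. \<Sum>l\<in>F. f l m"] by simp
  then show ?case using insert by simp
qed
qed

theorem lemma2p27:
  fixes s :: "'g::{finite,ab_group_add} \<Rightarrow> 'g \<Rightarrow> 'r::comm_ring_1"
  assumes comm: "\<forall>x y. cmult s x y = cmult s y x"
    and assoc: "\<forall>x y z. cmult s (cmult s x y) z = cmult s x (cmult s y z)"
    and unit: "\<forall>x. cmult s (basis_vec 0) x = x"
  shows "(\<forall>(iota :: 'r \<Rightarrow> 'b::comm_ring_1) (w :: 'g \<Rightarrow> 'b).
            is_ring_hom iota \<and> w 0 = 1 \<and> (\<forall>l l'. w l * w l' = iota (s l l') * w (l + l'))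
            \<longrightarrow> (\<exists>!phi. is_alg_hom s iota phi \<and> (\<forall>l. phi (basis_vec l) = w l)))
         \<and> principal_ideal (disc s)
           = principal_ideal (of_nat (CARD('g) ^ CARD('g)) * (\<Prod>l\<in>UNIV. s l (- l)))"
proof (intro conjI allI impI)
  fix iota :: "'r \<Rightarrow> 'b::comm_ring_1" and w :: "'g \<Rightarrow> 'b"
  assume H: "is_ring_hom iota \<and> w 0 = 1 \<and> (\<forall>l l'. w l * w l' = iota (s l l') * w (l + l'))"
  then have hom: "is_ring_hom iota" and w0: "w 0 = 1"
    and ww: "\<And>l l'. w l * w l' = iota (s l l') * w (l + l')" by auto
  have i0: "iota 0 = 0" by (rule ring_hom_0[OF hom])
  have i1: "iota 1 = 1" and iadd: "\<And>a b. iota (a + b) = iota a + iota b"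
    and imul: "\<And>a b. iota (a * b) = iota a * iota b" using hom by (auto simp: is_ring_hom_def)
  have isum: "\<And>f F. finite F \<Longrightarrow> iota (sum f F) = (\<Sum>x\<in>F. iota (f x))"
    by (rule ring_hom_sum[OF hom])
  define phi where "phi = (\<lambda>x. \<Sum>l\<in>UNIV. iota (x l) * w l)"
  have phi_bv: "phi (basis_vec l) = w l" for l
  proof -
    have "phi (basis_vec l) = (\<Sum>m\<in>UNIV. if m = l then w l else 0)"
      unfolding phi_def basis_vec_def by (intro sum.cong refl) (auto simp: i0 i1)
    then show ?thesis by simp
  qed
  have phi_mult: "phi (cmult s x y) = phi x * phi y" for x y
  proof -
    have "phi (cmult s x y) = (\<Sum>m\<in>UNIV. \<Sum>l\<in>UNIV. \<Sum>l'\<in>UNIV.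
            if l + l' = m then iota (x l) * iota (y l') * iota (s l l') * w m else 0)"
      unfolding phi_def cmult_def
      by (simp add: isum sum_distrib_right if_distrib i0 imul cong: if_cong) (intro sum.cong refl; simp)
    also have "\<dots> = (\<Sum>l\<in>UNIV. \<Sum>l'\<in>UNIV. \<Sum>m\<in>UNIV.
            if l + l' = m then iota (x l) * iota (y l') * iota (s l l') * w m else 0)"
      by (subst sum.swap, rule sum.cong[OF refl], rule sum.swap)
    also have "\<dots> = (\<Sum>l\<in>UNIV. \<Sum>l'\<in>UNIV. iota (x l) * iota (y l') * iota (s l l') * w (l + l'))"
      by simp
    also have "\<dots> = (\<Sum>l\<in>UNIV. \<Sum>l'\<in>UNIV. (iota (x l) * w l) * (iota (y l') * w l'))"
    proof (intro sum.cong refl)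
      fix l l'
      have "(iota (x l) * w l) * (iota (y l') * w l') = iota (x l) * iota (y l') * (w l * w l')"
        by (simp add: mult_ac)
      also have "\<dots> = iota (x l) * iota (y l') * iota (s l l') * w (l + l')"
        by (simp add: ww mult.assoc)
      finally show "iota (x l) * iota (y l') * iota (s l l') * w (l + l') = (iota (x l) * w l) * (iota (y l') * w l')" by simp
    qed
    also have "\<dots> = phi x * phi y"
      unfolding phi_def by (simp add: sum_product)
    finally show ?thesis .
  qed
  have phi_hom: "is_alg_hom s iota phi"
    unfolding is_alg_hom_def
  proof (intro conjI allI)
    show "phi (basis_vec 0) = 1" using phi_bv w0 by simp
  next
    fix x y :: "'g \<Rightarrow> 'r"
    show "phi (\<lambda>m. x m + y m) = phi x + phi y"
      unfolding phi_def by (simp add: iadd distrib_right sum.distrib)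
  next
    fix x y :: "'g \<Rightarrow> 'r"
    show "phi (cmult s x y) = phi x * phi y" by (rule phi_mult)
  next
    fix r and x :: "'g \<Rightarrow> 'r"
    show "phi (\<lambda>m. r * x m) = iota r * phi x"
      unfolding phi_def by (simp add: imul sum_distrib_left mult_ac)
  qed
  show "\<exists>!phi. is_alg_hom s iota phi \<and> (\<forall>l. phi (basis_vec l) = w l)"
  proof (rule ex1I[of _ phi])
    show "is_alg_hom s iota phi \<and> (\<forall>l. phi (basis_vec l) = w l)"
      using phi_hom phi_bv by blast
  next
    fix psi
    assume P: "is_alg_hom s iota psi \<and> (\<forall>l. psi (basis_vec l) = w l)"
    show "psi = phi"
    proof (rule ext)
      fix x :: "'g \<Rightarrow> 'r"
      have xe: "x = (\<lambda>m. \<Sum>l\<in>UNIV. x l * basis_vec l m)"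
        by (rule ext) (simp add: basis_vec_def if_distrib cong: if_cong)
      have "psi x = (\<Sum>l\<in>UNIV. psi (\<lambda>m. x l * basis_vec l m))"
        by (subst xe, rule alg_hom_sum) (use P in auto)
      also have "\<dots> = (\<Sum>l\<in>UNIV. iota (x l) * w l)"
      proof (intro sum.cong refl)
        fix l
        have "psi (\<lambda>m. x l * basis_vec l m) = iota (x l) * psi (basis_vec l)"
          using P unfolding is_alg_hom_def by blast
        then show "psi (\<lambda>m. x l * basis_vec l m) = iota (x l) * w l" using P by simp
      qed
      finally show "psi x = phi x" unfolding phi_def .
    qed
  qed
next
  have s0: "s 0 k = 1" for k
  proof -
    have "cmult s (basis_vec 0) (basis_vec k) k = basis_vec k k" using unit by simp
    then show ?thesis by (simp only: cmult_bv) (simp add: basis_vec_def)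
  qed
  have entry: "alg_trace s (cmult s (basis_vec l) (basis_vec m))
      = (if m = - l then of_nat CARD('g) * s l (- l) else 0)" for l m
  proof -
    have "l + m = 0 \<longleftrightarrow> m = - l" by (metis add.commute neg_eq_iff_add_eq_0)
    then show ?thesis by (auto simp: trace_eq cmult_bv s0 mult_ac)
  qed
  have "disc s = det (\<chi> l m. if m = - l then of_nat CARD('g) * s l (- l) else (0::'r))"
    unfolding disc_def entry ..
  also have "\<dots> = of_int (sign (uminus::'g\<Rightarrow>'g)) * (\<Prod>l\<in>UNIV. of_nat CARD('g) * s l (- l))"
    by (rule det_monomial)
  also have "\<dots> = of_int (sign (uminus::'g\<Rightarrow>'g)) *
        (of_nat (CARD('g) ^ CARD('g)) * (\<Prod>l\<in>UNIV. s l (- l)))"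
    by (simp add: prod.distrib)
  finally show "principal_ideal (disc s)
           = principal_ideal (of_nat (CARD('g) ^ CARD('g)) * (\<Prod>l\<in>UNIV. s l (- l)))"
    by (simp only: principal_ideal_sign)
qed

end
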